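(* For every integer $k \geq 2$ there is an MSyDS $\mathcal{S}_k$ with $k$ layers, in which every local function is a threshold function and every master function is \texttt{OR}, with the following properties: (1) there is no MSyDS with fewer than $k$ layers, on the same node set, in which every local function is a symmetric Boolean function and every master function is \texttt{OR}, that is equivalent to $\mathcal{S}_k$; (2) there is an MSyDS with two layers, on the same node set, in which every local function is a threshold function and every master function is \texttt{AND}, that is equivalent to $\mathcal{S}_k$.
   Context: A multilayer synchronous dynamical system (MSyDS) $\mathcal{S}$ over $\mathbb{B}=\{0,1\}$ with $k\ge 1$ layers consists of: a finite node set $V$; undirected simple graphs $G_i=(V,E_i)$, $1\le i\le k$ (all layers share the node set $V$); for each layer $i$ and node $v$ a local function $f_{i,v}$ with output in $\mathbb{B}$ whose inputs are the states of the nodes in the closed neighborhood of $v$ in $G_i$ ($v$ and its neighbors in $G_i$); and for each node $v$ a master function $\psi_v:\mathbb{B}^k\to\mathbb{B}$. A configuration is a map $\mathcal{C}:V\to\mathbb{B}$; its successor is $\mathcal{C}'$ with $\mathcal{C}'(v)=\psi_v(f_{1,v}(\mathcal{C}),\dots,f_{k,v}(\mathcal{C}))$ for all $v$ (synchronous update), where $f_{i,v}(\mathcal{C})$ is $f_{i,v}$ evaluated on the states in $\mathcal{C}$ of the closed neighborhood of $v$ in $G_i$. The phase space is the directed graph on all configurations with an arc from each configuration to its successor. Two MSyDSs on the same node set are equivalent if their phase spaces are identical. For an integer $\tau\ge 0$, the $\tau$-threshold function equals 1 iff at least $\tau$ of its inputs equal 1 (a threshold exceeding the number of inputs gives the constant-0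 function); a threshold function is a $\tau$-threshold function for some $\tau\ge 0$. A Boolean function is symmetric if its value depends only on the number of 1's among its inputs. \texttt{OR} is 1 iff at least one input is 1; \texttt{AND} is 1 iff all inputs are 1. *)

theory Defs
  imports Main
begin

text \<open>Layers are indexed by 0..<nlayers; edge i is the edge relation of layer i;
  lfun i v is the local function of node v in layer i (acting on a configuration,
  required to depend only on the closed neighbourhood of v in layer i);
  mfun v is the master function of node v (acting on the vector of layer outputs,
  required to depend only on the entries 0..<nlayers).\<close>

record 'v msyds =
  nodes :: "'v set"
  nlayers :: nat
  edge :: "nat \<Rightarrow> 'v \<Rightarrow> 'v \<Rightarrow> bool"
  lfun :: "nat \<Rightarrow> 'v \<Rightarrow> ('v \<Rightarrow> bool) \<Rightarrow> bool"
  mfun :: "'v \<Rightarrow> (nat \<Rightarrow> bool) \<Rightarrow> bool"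

definition cnbr :: "'v msyds \<Rightarrow> nat \<Rightarrow> 'v \<Rightarrow> 'v set" where
  "cnbr S i v = {u \<in> nodes S. u = v \<or> edge S i v u}"

definition is_msyds :: "'v msyds \<Rightarrow> bool" where
  "is_msyds S \<longleftrightarrow> finite (nodes S) \<and> nlayers S \<ge> 1 \<and>
     (\<forall>i<nlayers S. \<forall>u w. edge S i u w \<longrightarrow>
         u \<in> nodes S \<and> w \<in> nodes S \<and> u \<noteq> w \<and> edge S i w u) \<and>
     (\<forall>i<nlayers S. \<forall>v\<in>nodes S. \<forall>C C'. (\<forall>u\<in>cnbr S i v. C u = C' u)
         \<longrightarrow> lfun S i v C = lfun S i v C') \<and>
     (\<forall>v\<in>nodes S. \<forall>x y. (\<forall>i<nlayers S. x i = y i) \<longrightarrow> mfun S v x = mfun S v y)"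

definition successor :: "'v msyds \<Rightarrow> ('v \<Rightarrow> bool) \<Rightarrow> 'v \<Rightarrow> bool" where
  "successor S C v = mfun S v (\<lambda>i. lfun S i v C)"

text \<open>Equivalence: same node set and identical phase spaces (same successor map on
  all configurations, configurations being considered on the node set).\<close>
definition equivalent :: "'v msyds \<Rightarrow> 'v msyds \<Rightarrow> bool" where
  "equivalent S T \<longleftrightarrow> nodes S = nodes T \<and>
     (\<forall>C. \<forall>v\<in>nodes S. successor S C v = successor T C v)"

definition num_ones :: "'v msyds \<Rightarrow> nat \<Rightarrow> 'v \<Rightarrow> ('v \<Rightarrow> bool) \<Rightarrow> nat" where
  "num_ones S i v C = card {u \<in> cnbr S i v. C u}"

definition all_threshold :: "'v msyds \<Rightarrow> bool" where
  "all_threshold S \<longleftrightarrow> (\<forall>i<nlayers S. \<forall>v\<in>nodes S.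
      \<exists>\<tau>::nat. \<forall>C. lfun S i v C = (\<tau> \<le> num_ones S i v C))"

definition all_symmetric :: "'v msyds \<Rightarrow> bool" where
  "all_symmetric S \<longleftrightarrow> (\<forall>i<nlayers S. \<forall>v\<in>nodes S.
      \<exists>g::nat \<Rightarrow> bool. \<forall>C. lfun S i v C = g (num_ones S i v C))"

definition all_master_or :: "'v msyds \<Rightarrow> bool" where
  "all_master_or S \<longleftrightarrow> (\<forall>v\<in>nodes S. \<forall>x. mfun S v x = (\<exists>i<nlayers S. x i))"

definition all_master_and :: "'v msyds \<Rightarrow> bool" where
  "all_master_and S \<longleftrightarrow> (\<forall>v\<in>nodes S. \<forall>x. mfun S v x = (\<forall>i<nlayers S. x i))"

end

theory Submission
  imports Defs
begin

definition SS :: "nat \<Rightarrow> nat msyds" where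
  "SS k = \<lparr> nodes = {0..k}, nlayers = k,
     edge = (\<lambda>i u w. (u = 0 \<and> w = Suc i) \<or> (u = Suc i \<and> w = 0)),
     lfun = (\<lambda>i v C. if v = 0 then C 0 \<and> C (Suc i) else True),
     mfun = (\<lambda>v x. \<exists>i<k. x i) \<rparr>"

definition TT :: "nat \<Rightarrow> nat msyds" where
  "TT k = \<lparr> nodes = {0..k}, nlayers = 2,
     edge = (\<lambda>i u w. i = 1 \<and> ((u = 0 \<and> w \<in> {1..k}) \<or> (w = 0 \<and> u \<in> {1..k}))),
     lfun = (\<lambda>i v C. if v = 0 then (if i = 0 then C 0 else 2 \<le> card {u\<in>{0..k}. C u}) else True),
     mfun = (\<lambda>v x. x 0 \<and> x 1) \<rparr>"

lemma SS_cnbr0: "i < k \<Longrightarrow> cnbr (SS k) i 0 = {0, Suc i}"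
  by (auto simp: cnbr_def SS_def)

lemma SS_ok: "k \<ge> 2 \<Longrightarrow> is_msyds (SS k)"
  unfolding is_msyds_def
  apply (intro conjI)
  apply (simp add: SS_def)
  apply (simp add: SS_def)
  apply (auto simp: SS_def)[1]
  apply (auto simp: SS_def cnbr_def)
  done

lemma SS_thr: "all_threshold (SS k)"
  unfolding all_threshold_def
proof (intro allI impI ballI)
  fix i v assume i: "i < nlayers (SS k)" and v: "v \<in> nodes (SS k)"
  show "\<exists>\<tau>::nat. \<forall>C. lfun (SS k) i v C = (\<tau> \<le> num_ones (SS k) i v C)"
  proof (cases "v = 0")
    case True
    have "\<forall>C. lfun (SS k) i v C = (2 \<le> num_ones (SS k) i v C)"
    proof
      fix C
      have "{u \<in> cnbr (SS k) i v. C u} = {u\<in>{0, Suc i}. C u}"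
        using True i SS_cnbr0[of i k] by (simp add: SS_def)
      moreover have "(2 \<le> card {u\<in>{0, Suc i}. C u}) = (C 0 \<and> C (Suc i))"
      proof (cases "C 0"; cases "C (Suc i)")
        assume "C 0" "C (Suc i)"
        then have "{u\<in>{0, Suc i}. C u} = {0, Suc i}" by blast
        then show ?thesis using \<open>C 0\<close> \<open>C (Suc i)\<close> by simp
      next
        assume "C 0" "\<not> C (Suc i)"
        then have "{u\<in>{0, Suc i}. C u} = {0}" by blast
        then show ?thesis using \<open>\<not> C (Suc i)\<close> by simp
      next
        assume "\<not> C 0" "C (Suc i)"
        then have "{u\<in>{0, Suc i}. C u} = {Suc i}" by blast
        then show ?thesis using \<open>\<not> C 0\<close> by simp
      next
        assume "\<not> C 0" "\<not> C (Suc i)"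
        then have "{u\<in>{0, Suc i}. C u} = {}" by blast
        then show ?thesis using \<open>\<not> C 0\<close> by (subst \<open>_ = {}\<close>) simp
      qed
      ultimately show "lfun (SS k) i v C = (2 \<le> num_ones (SS k) i v C)"
        using True by (simp add: num_ones_def SS_def)
    qed
    then show ?thesis by blast
  next
    case False
    then show ?thesis by (intro exI[of _ 0]) (simp add: SS_def)
  qed
qed

lemma TT_cnbr00: "cnbr (TT k) 0 0 = {0}"
  by (auto simp: TT_def cnbr_def)

lemma TT_cnbr10: "cnbr (TT k) 1 0 = {0..k}"
  by (auto simp: TT_def cnbr_def)

lemma TT_ok: "is_msyds (TT k)"
  unfolding is_msyds_def
proof (intro conjI)
  show "finite (nodes (TT k))" by (simp add: TT_def)
  show "1 \<le> nlayers (TT k)" by (simp add: TT_def)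
  show "\<forall>i<nlayers (TT k). \<forall>u w. edge (TT k) i u w \<longrightarrow>
         u \<in> nodes (TT k) \<and> w \<in> nodes (TT k) \<and> u \<noteq> w \<and> edge (TT k) i w u"
    by (auto simp: TT_def)
  show "\<forall>v\<in>nodes (TT k). \<forall>x y. (\<forall>i<nlayers (TT k). x i = y i) \<longrightarrow> mfun (TT k) v x = mfun (TT k) v y"
    by (simp add: TT_def)
  show "\<forall>i<nlayers (TT k). \<forall>v\<in>nodes (TT k). \<forall>C C'. (\<forall>u\<in>cnbr (TT k) i v. C u = C' u)
         \<longrightarrow> lfun (TT k) i v C = lfun (TT k) i v C'"
  proof (intro allI impI ballI)
    fix i v and C C' :: "nat \<Rightarrow> bool" assume i: "i < nlayers (TT k)" and v: "v \<in> nodes (TT k)"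
      and h: "\<forall>u\<in>cnbr (TT k) i v. C u = C' u"
    show "lfun (TT k) i v C = lfun (TT k) i v C'"
    proof (cases "v = 0")
      case False then show ?thesis by (simp add: TT_def)
    next
      case True
      show ?thesis
      proof (cases "i = 0")
        case True
        then show ?thesis using h \<open>v = 0\<close> TT_cnbr00[of k] by (simp add: TT_def)
      next
        case False
        with i have i1: "i = 1" by (simp add: TT_def)
        then have "\<forall>u\<in>{0..k}. C u = C' u" using h \<open>v = 0\<close> TT_cnbr10[of k] by simp
        then have "{u\<in>{0..k}. C u} = {u\<in>{0..k}. C' u}" by blast
        then show ?thesis using i1 \<open>v = 0\<close> by (simp add: TT_def)
      qed
    qed
  qed
qed

lemma TT_thr: "all_threshold (TT k)"
  unfolding all_threshold_def
proof (intro allI impI ballI)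
  fix i v assume i: "i < nlayers (TT k)" and v: "v \<in> nodes (TT k)"
  show "\<exists>\<tau>::nat. \<forall>C. lfun (TT k) i v C = (\<tau> \<le> num_ones (TT k) i v C)"
  proof (cases "v = 0")
    case True
    have "\<forall>C. lfun (TT k) i v C = ((if i = 0 then 1 else 2) \<le> num_ones (TT k) i v C)"
    proof
      fix C
      show "lfun (TT k) i v C = ((if i = 0 then 1 else 2) \<le> num_ones (TT k) i v C)"
      proof (cases "i = 0")
        case True
        have "{u \<in> cnbr (TT k) i v. C u} = (if C 0 then {0} else {})"
          using True \<open>v = 0\<close> TT_cnbr00[of k] by auto
        then show ?thesis using True \<open>v = 0\<close>
          by (simp add: num_ones_def TT_def)
      next
        case False
        with i have i1: "i = 1" by (simp add: TT_def)
        have e: "{u \<in> cnbr (TT k) i v. C u} = {u\<in>{0..k}. C u}"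
          using i1 \<open>v = 0\<close> TT_cnbr10[of k] by simp
        then show ?thesis using i1 \<open>v = 0\<close>
          by (simp add: num_ones_def TT_def)
      qed
    qed
    then show ?thesis by blast
  next
    case False
    then show ?thesis by (intro exI[of _ 0]) (simp add: TT_def)
  qed
qed

lemma succ_SS0: "successor (SS k) C 0 = (C 0 \<and> (\<exists>i<k. C (Suc i)))"
  by (auto simp: successor_def SS_def)

lemma lower:
  assumes T: "is_msyds T" "nodes T = {0..k}" "nlayers T < k"
     "all_symmetric T" "all_master_or T" "equivalent T (SS k)"
  shows False
proof -
  let ?m = "nlayers T"
  have sT: "\<And>D. successor T D 0 = (\<exists>i<?m. lfun T i 0 D)"
    using T(2,5) by (simp add: successor_def all_master_or_def)
  have eq: "\<And>D. successor T D 0 = successor (SS k) D 0"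
    using T(6) by (simp add: equivalent_def SS_def)
  have sym: "\<And>i D E. i < ?m \<Longrightarrow> num_ones T i 0 D = num_ones T i 0 E \<Longrightarrow> lfun T i 0 D = lfun T i 0 E"
  proof -
    fix i D E assume "i < ?m" "num_ones T i 0 D = num_ones T i 0 E"
    moreover obtain g where "\<forall>C. lfun T i 0 C = g (num_ones T i 0 C)"
      using T(4) \<open>i < ?m\<close> T(2) unfolding all_symmetric_def by fastforce
    ultimately show "lfun T i 0 D = lfun T i 0 E" by simp
  qed
  have claim: "\<exists>i<?m. cnbr T i 0 = {0, Suc j}" if j: "j < k" for j
  proof -
    define C where "C = (\<lambda>u. u = 0 \<or> u = Suc j)"
    have "successor (SS k) C 0" using j by (auto simp: succ_SS0 C_def)
    then obtain i where i: "i < ?m" "lfun T i 0 C" using eq sT by auto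
    let ?N = "cnbr T i 0"
    have N0: "0 \<in> ?N" using T(2) by (simp add: cnbr_def)
    have Nsub: "?N \<subseteq> {0..k}" using T(2) by (auto simp: cnbr_def)
    show ?thesis
    proof (cases "Suc j \<in> ?N")
      case False
      define D where "D = (\<lambda>u::nat. u = 0)"
      have "{u \<in> ?N. C u} = {0}" using False N0 by (auto simp: C_def)
      moreover have "{u \<in> ?N. D u} = {0}" using N0 by (auto simp: D_def)
      ultimately have "lfun T i 0 D" using sym[of i C D] i by (simp add: num_ones_def)
      then have "successor (SS k) D 0" using eq sT i by auto
      then show ?thesis by (simp add: succ_SS0 D_def)
    next
      case True
      show ?thesis
      proof (cases "\<exists>w\<in>?N. w \<noteq> 0 \<and> w \<noteq> Suc j")
        case True2: True
        then obtain w where w: "w \<in> ?N" "w \<noteq> 0" "w \<noteq> Suc j" by blast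
        define D where "D = (\<lambda>u::nat. u = w \<or> u = Suc j)"
        have "{u \<in> ?N. C u} = {0, Suc j}" using True N0 by (auto simp: C_def)
        moreover have "{u \<in> ?N. D u} = {w, Suc j}" using True w by (auto simp: D_def)
        ultimately have "num_ones T i 0 C = num_ones T i 0 D" using w by (simp add: num_ones_def)
        then have "lfun T i 0 D" using sym[of i C D] i by simp
        then have "successor (SS k) D 0" using eq sT i by auto
        then show ?thesis using w by (simp add: succ_SS0 D_def)
      next
        case False
        then have "?N = {0, Suc j}" using True N0 by auto
        then show ?thesis using i by blast
      qed
    qed
  qed
  define h where "h j = (SOME i. i < ?m \<and> cnbr T i 0 = {0, Suc j})" for j
  have h: "h j < ?m \<and> cnbr T (h j) 0 = {0, Suc j}" if "j < k" for j
    unfolding h_def using someI_ex[OF claim[OF that]] .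
  have "inj_on h {..<k}"
  proof
    fix a b assume "a \<in> {..<k}" "b \<in> {..<k}" "h a = h b"
    then have "{0, Suc a} = ({0, Suc b} :: nat set)" using h by (metis lessThan_iff)
    then show "a = b" by (auto simp: doubleton_eq_iff)
  qed
  moreover have "h ` {..<k} \<subseteq> {..<?m}" using h by auto
  ultimately have "card {..<k} \<le> card {..<?m}" by (intro card_inj_on_le) auto
  then have False using T(3) by simp
  then show ?thesis .
qed

theorem theorem6p2:
  fixes k :: nat
  assumes "k \<ge> 2"
  shows "\<exists>S :: nat msyds.
     is_msyds S \<and> nlayers S = k \<and> all_threshold S \<and> all_master_or S \<and>
     \<not> (\<exists>T :: nat msyds. is_msyds T \<and> nodes T = nodes S \<and> nlayers T < k \<and>
            all_symmetric T \<and> all_master_or T \<and> equivalent T S) \<and>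
     (\<exists>T :: nat msyds. is_msyds T \<and> nodes T = nodes S \<and> nlayers T = 2 \<and>
            all_threshold T \<and> all_master_and T \<and> equivalent T S)"
proof (rule exI[of _ "SS k"], intro conjI)
  show "is_msyds (SS k)" using SS_ok assms .
  show "nlayers (SS k) = k" by (simp add: SS_def)
  show "all_threshold (SS k)" by (rule SS_thr)
  show "all_master_or (SS k)" by (simp add: all_master_or_def SS_def)
  show "\<not> (\<exists>T :: nat msyds. is_msyds T \<and> nodes T = nodes (SS k) \<and> nlayers T < k \<and>
            all_symmetric T \<and> all_master_or T \<and> equivalent T (SS k))"
  proof
    assume "\<exists>T :: nat msyds. is_msyds T \<and> nodes T = nodes (SS k) \<and> nlayers T < k \<and>
            all_symmetric T \<and> all_master_or T \<and> equivalent T (SS k)"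
    moreover have "nodes (SS k) = {0..k}" by (simp add: SS_def)
    ultimately show False using lower by metis
  qed
  have "equivalent (TT k) (SS k)"
    unfolding equivalent_def
  proof (intro conjI allI ballI)
    show "nodes (TT k) = nodes (SS k)" by (simp add: TT_def SS_def)
    fix C v assume "v \<in> nodes (TT k)"
    show "successor (TT k) C v = successor (SS k) C v"
    proof (cases "v = 0")
      case True
      have "(C 0 \<and> 2 \<le> card {u\<in>{0..k}. C u}) = (C 0 \<and> (\<exists>i<k. C (Suc i)))"
      proof (cases "C 0")
        case True
        have fin: "finite {u\<in>{1..k}. C u}" by simp
        have "{u\<in>{0..k}. C u} = insert 0 {u\<in>{1..k}. C u}" using True by auto
        then have "card {u\<in>{0..k}. C u} = Suc (card {u\<in>{1..k}. C u})"
          using fin by simp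
        moreover have "(0 < card {u\<in>{1..k}. C u}) = ({u\<in>{1..k}. C u} \<noteq> {})"
          using card_gt_0_iff[of "{u\<in>{1..k}. C u}"] fin by blast
        moreover have "({u\<in>{1..k}. C u} \<noteq> {}) = (\<exists>i<k. C (Suc i))"
        proof
          assume "{u\<in>{1..k}. C u} \<noteq> {}"
          then obtain u where "u \<in> {1..k}" "C u" by blast
          then show "\<exists>i<k. C (Suc i)" by (intro exI[of _ "u - 1"]) auto
        next
          assume "\<exists>i<k. C (Suc i)"
          then obtain i where "i < k" "C (Suc i)" by blast
          then have "Suc i \<in> {u\<in>{1..k}. C u}" by simp
          then show "{u\<in>{1..k}. C u} \<noteq> {}" by blast
        qed
        ultimately show ?thesis using True by (simp add: Suc_le_eq)
      qed simp
      moreover have "successor (TT k) C 0 = (C 0 \<and> 2 \<le> card {u\<in>{0..k}. C u})"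
        by (simp add: successor_def TT_def)
      ultimately show ?thesis using True succ_SS0[of k C] by simp
    next
      case False
      then show ?thesis using assms by (auto simp: successor_def TT_def SS_def intro: exI[of _ 0])
    qed
  qed
  then show "\<exists>T :: nat msyds. is_msyds T \<and> nodes T = nodes (SS k) \<and> nlayers T = 2 \<and>
            all_threshold T \<and> all_master_and T \<and> equivalent T (SS k)"
    by (intro exI[of _ "TT k"] conjI TT_ok TT_thr)
       (auto simp: TT_def SS_def all_master_and_def less_2_cases_iff)
qed

end
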